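(* Let $n\geq 2$, $k_n=\lceil\log_2 n\rceil$ (so $n\in(2^{k_n-1},2^{k_n}]$), and let $T_n^{gfb}=(T_a,T_b)$ be the GFB tree with $n$ leaves, where $T_a,T_b$ have $n_a\geq n_b$ leaves. Then: (1) if $n\in(2^{k_n-1},3\cdot2^{k_n-2})$, then $n_a=n-2^{k_n-2}$ and $n_b=2^{k_n-2}$; in particular $T_b$ is the fully balanced tree of height $k_n-2$ and $\lceil\log_2 n_a\rceil=k_n-1$; (2) if $n=3\cdot2^{k_n-2}$, then $n_a=2^{k_n-1}$ and $n_b=2^{k_n-2}$; in particular $T_a$ and $T_b$ are the fully balanced trees of heights $k_n-1$ and $k_n-2$; (3) if $n\in(3\cdot2^{k_n-2},2^{k_n}]$, then $n_a=2^{k_n-1}$ and $n_b=n-2^{k_n-1}$; in particular $T_a$ is the fully balanced tree of height $k_n-1$ and $\lceil\log_2 n_b\rceil=k_n-1$.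
   Context: A rooted binary tree with $n\geq 2$ leaves is a rooted tree whose root has degree 2 and all other internal nodes have degree 3; for $n=1$ it is a single node. Trees are considered up to isomorphism. $T=(T_a,T_b)$ denotes the decomposition into the subtrees rooted at the two children of the root. The fully balanced tree of height $k$ is the rooted binary tree with $2^k$ leaves all at depth $k$. The GFB tree $T_n^{gfb}$ is the output of: start with $n$ single-node trees; while more than one tree remains, remove a tree $u$ of minimal size (number of leaves), then remove a tree $v$ of minimal size among the remaining ones, and insert the tree with a new root whose children are the roots of $u$ and $v$; output the remaining tree. *)

theory Defs
  imports Complex_Main "HOL-Library.Multiset"
begin

datatype btree = Leaf | Node btree btree

fun leaves :: "btree \<Rightarrow> nat" where
  "leaves Leaf = 1"
| "leaves (Node l r) = leaves l + leaves r"

fun iso :: "btree \<Rightarrow> btree \<Rightarrow> bool" where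
  "iso Leaf Leaf = True"
| "iso (Node a b) (Node c d) = ((iso a c \<and> iso b d) \<or> (iso a d \<and> iso b c))"
| "iso _ _ = False"

fun fb :: "nat \<Rightarrow> btree" where
  "fb 0 = Leaf"
| "fb (Suc k) = Node (fb k) (fb k)"

text \<open>One step of the GFB procedure (any tie-breaking allowed).\<close>
definition gfb_step :: "btree multiset \<Rightarrow> btree multiset \<Rightarrow> bool" where
  "gfb_step M M' \<longleftrightarrow> (\<exists>u v.
      u \<in># M \<and> (\<forall>w\<in>#M. leaves u \<le> leaves w) \<and>
      v \<in># M - {#u#} \<and> (\<forall>w\<in>#M - {#u#}. leaves v \<le> leaves w) \<and>
      M' = M - {#u, v#} + {#Node u v#})"

definition gfb_output :: "nat \<Rightarrow> btree \<Rightarrow> bool" where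
  "gfb_output n T \<longleftrightarrow> gfb_step\<^sup>*\<^sup>* (replicate_mset n Leaf) {#T#}"

end

theory Submission
  imports Defs
begin


lemma leaves_fb[simp]: "leaves (fb j) = 2 ^ j"
  by (induction j) auto

definition good0 :: "btree multiset \<Rightarrow> bool" where
  "good0 M \<longleftrightarrow> (\<exists>j a b. M = replicate_mset a (fb j) + replicate_mset b (fb (Suc j)))"

definition good1 :: "btree multiset \<Rightarrow> bool" where
  "good1 M \<longleftrightarrow> (\<exists>j a b R. M = add_mset R (replicate_mset a (fb j) + replicate_mset b (fb (Suc j)))
      \<and> 2 ^ j < leaves R \<and> leaves R < 2 ^ Suc j)"

lemma step_split:
  assumes "gfb_step M M'"
  obtains u v M0 where "M = add_mset u (add_mset v M0)" "M' = add_mset (Node u v) M0"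
    "\<forall>w\<in>#M. leaves u \<le> leaves w" "\<forall>w\<in>#add_mset v M0. leaves v \<le> leaves w"
proof -
  from assms obtain u v where u: "u \<in># M" "\<forall>w\<in>#M. leaves u \<le> leaves w"
    and v: "v \<in># M - {#u#}" "\<forall>w\<in>#M - {#u#}. leaves v \<le> leaves w"
    and M': "M' = M - {#u, v#} + {#Node u v#}"
    unfolding gfb_step_def by blast
  obtain M1 where M1: "M = add_mset u M1" using u(1) by (metis insert_DiffM)
  then have "M - {#u#} = M1" by simp
  with v obtain M0 where M0: "M1 = add_mset v M0" by (metis insert_DiffM)
  show ?thesis
    apply (rule that[of u v M0])
    using M1 M0 M' u v by auto
qed

lemma step_sum:
  assumes "gfb_step M M'"
  shows "sum_mset (image_mset leaves M') = sum_mset (image_mset leaves M)"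
  using assms by (rule step_split) auto

lemma step_size:
  assumes "gfb_step M M'"
  shows "size M = Suc (size M')"
  using assms by (rule step_split) auto

lemma good0_shift: "replicate_mset 0 (fb j) + replicate_mset b (fb (Suc j)) =
   replicate_mset b (fb (Suc j)) + replicate_mset 0 (fb (Suc (Suc j)))" by simp

lemma step_good0:
  assumes st: "gfb_step M M'" and M: "M = replicate_mset a (fb j) + replicate_mset b (fb (Suc j))"
    and a: "a > 0"
  shows "good0 M' \<or> good1 M'"
proof -
  obtain u v M0 where uv: "M = add_mset u (add_mset v M0)" "M' = add_mset (Node u v) M0"
    "\<forall>w\<in>#M. leaves u \<le> leaves w" "\<forall>w\<in>#add_mset v M0. leaves v \<le> leaves w"
    using st by (rule step_split)
  have fj: "fb j \<in># M" using M a by simp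
  have uin: "u \<in># M" using uv by simp
  have "u = fb j"
  proof (rule ccontr)
    assume "u \<noteq> fb j"
    then have "u = fb (Suc j)" using uin M by (auto split: if_splits)
    then show False using uv(3) fj by fastforce
  qed
  obtain a' where a': "a = Suc a'" using a gr0_conv_Suc by blast
  have M0v: "add_mset v M0 = replicate_mset a' (fb j) + replicate_mset b (fb (Suc j))"
  proof -
    have "add_mset v M0 = M - {#fb j#}" using uv(1) \<open>u = fb j\<close> by simp
    then show ?thesis using M a' by simp
  qed
  have vin: "v \<in># add_mset v M0" by simp
  show ?thesis
  proof (cases "a' = 0")
    case False
    have fj': "fb j \<in># add_mset v M0" using M0v False by simp
    have "v = fb j"
    proof (rule ccontr)
      assume "v \<noteq> fb j"
      then have "v = fb (Suc j)" using vin M0v by (auto split: if_splits)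
      then show False using uv(4) fj' by fastforce
    qed
    obtain a'' where "a' = Suc a''" using False not0_implies_Suc by blast
    have "M0 = add_mset v M0 - {#v#}" by simp
    then have "M0 = replicate_mset a'' (fb j) + replicate_mset b (fb (Suc j))"
      using M0v \<open>v = fb j\<close> \<open>a' = Suc a''\<close> by simp
    then have "M' = replicate_mset a'' (fb j) + replicate_mset (Suc b) (fb (Suc j))"
      using uv(2) \<open>u = fb j\<close> \<open>v = fb j\<close> by simp
    then show ?thesis unfolding good0_def by blast
  next
    case True
    then have M0v': "add_mset v M0 = replicate_mset b (fb (Suc j))" using M0v by simp
    then have "v = fb (Suc j)" using vin by (metis in_replicate_mset)
    have "b \<noteq> 0" using M0v' by (metis empty_not_add_mset replicate_mset_0)
    then obtain b' where "b = Suc b'" using not0_implies_Suc by blast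
    have "M0 = add_mset v M0 - {#v#}" by simp
    then have "M0 = replicate_mset b' (fb (Suc j))"
      using M0v' \<open>v = fb (Suc j)\<close> \<open>b = Suc b'\<close> by simp
    then have "M' = add_mset (Node (fb j) (fb (Suc j))) (replicate_mset b' (fb (Suc j)) + replicate_mset 0 (fb (Suc (Suc j))))"
      using uv(2) \<open>u = fb j\<close> \<open>v = fb (Suc j)\<close> by simp
    moreover have "2 ^ Suc j < leaves (Node (fb j) (fb (Suc j)))" "leaves (Node (fb j) (fb (Suc j))) < 2 ^ Suc (Suc j)"
      by simp_all
    ultimately show ?thesis unfolding good1_def by blast
  qed
qed

lemma not_min: "\<forall>w\<in>#M. leaves x \<le> leaves w \<Longrightarrow> y \<in># M \<Longrightarrow> leaves y < leaves z \<Longrightarrow> x \<noteq> z"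
  by force

lemma step_good1:
  assumes st: "gfb_step M M'" and M: "M = add_mset R (replicate_mset a (fb j) + replicate_mset b (fb (Suc j)))"
    and R: "2 ^ j < leaves R" "leaves R < 2 ^ Suc j"
  shows "good1 M'"
proof -
  obtain u v M0 where uv: "M = add_mset u (add_mset v M0)" "M' = add_mset (Node u v) M0"
    "\<forall>w\<in>#M. leaves u \<le> leaves w" "\<forall>w\<in>#add_mset v M0. leaves v \<le> leaves w"
    using st by (rule step_split)
  have uin: "u \<in># M" using uv by simp
  have vin: "v \<in># add_mset v M0" by simp
  have Rin: "R \<in># M" using M by simp
  have uR: "u \<noteq> fb (Suc j)" by (rule not_min[OF uv(3) Rin]) (use R in simp)
  show ?thesis
  proof (cases a)
    case 0
    then have "u = R" using uin uR M by (auto split: if_splits)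
    then have M0v: "add_mset v M0 = replicate_mset b (fb (Suc j))" using uv(1) M 0 by simp
    then have "v = fb (Suc j)" using vin by (metis in_replicate_mset)
    have "b \<noteq> 0" using M0v by (metis empty_not_add_mset replicate_mset_0)
    then obtain b' where "b = Suc b'" using not0_implies_Suc by blast
    have "M0 = add_mset v M0 - {#v#}" by simp
    then have "M0 = replicate_mset b' (fb (Suc j))"
      using M0v \<open>v = fb (Suc j)\<close> \<open>b = Suc b'\<close> by simp
    then have "M' = add_mset (Node R (fb (Suc j))) (replicate_mset b' (fb (Suc j)) + replicate_mset 0 (fb (Suc (Suc j))))"
      using uv(2) \<open>u = R\<close> \<open>v = fb (Suc j)\<close> by simp
    moreover have "2 ^ Suc j < leaves (Node R (fb (Suc j)))" "leaves (Node R (fb (Suc j))) < 2 ^ Suc (Suc j)"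
      using R by simp_all
    ultimately show ?thesis unfolding good1_def by blast
  next
    case (Suc a')
    have fj: "fb j \<in># M" using M Suc by simp
    have uRR: "u \<noteq> R" by (rule not_min[OF uv(3) fj]) (use R in simp)
    then have "u = fb j" using uin uR M by (auto split: if_splits)
    have M0v: "add_mset v M0 = add_mset R (replicate_mset a' (fb j) + replicate_mset b (fb (Suc j)))"
    proof -
      have "add_mset v M0 = M - {#fb j#}" using uv(1) \<open>u = fb j\<close> by simp
      then show ?thesis using M Suc by simp
    qed
    have Rin': "R \<in># add_mset v M0" using M0v by simp
    have vR: "v \<noteq> fb (Suc j)" by (rule not_min[OF uv(4) Rin']) (use R in simp)
    show ?thesis
    proof (cases a')
      case 0
      then have "v = R" using vin vR M0v by (auto split: if_splits)
      have "M0 = add_mset v M0 - {#v#}" by simp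
      then have "M0 = replicate_mset b (fb (Suc j))"
        using M0v \<open>v = R\<close> 0 by simp
      then have "M' = add_mset (Node (fb j) R) (replicate_mset b (fb (Suc j)) + replicate_mset 0 (fb (Suc (Suc j))))"
        using uv(2) \<open>u = fb j\<close> \<open>v = R\<close> by simp
      moreover have "2 ^ Suc j < leaves (Node (fb j) R)" "leaves (Node (fb j) R) < 2 ^ Suc (Suc j)"
        using R by simp_all
      ultimately show ?thesis unfolding good1_def by blast
    next
      case (Suc a'')
      have fj': "fb j \<in># add_mset v M0" using M0v Suc by simp
      have vRR: "v \<noteq> R" by (rule not_min[OF uv(4) fj']) (use R in simp)
      then have "v = fb j" using vin vR M0v by (auto split: if_splits)
      have "M0 = add_mset v M0 - {#v#}" by simp
      then have "M0 = add_mset R (replicate_mset a'' (fb j) + replicate_mset b (fb (Suc j)))"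
        using M0v \<open>v = fb j\<close> Suc by simp
      then have "M' = add_mset R (replicate_mset a'' (fb j) + replicate_mset (Suc b) (fb (Suc j)))"
        using uv(2) \<open>u = fb j\<close> \<open>v = fb j\<close> by simp
      then show ?thesis unfolding good1_def using R by blast
    qed
  qed
qed

lemma step_good:
  assumes st: "gfb_step M M'" and g: "good0 M \<or> good1 M"
  shows "good0 M' \<or> good1 M'"
proof (cases "good1 M")
  case True
  then show ?thesis using step_good1[OF st] unfolding good1_def by blast
next
  case False
  with g obtain j a b where M: "M = replicate_mset a (fb j) + replicate_mset b (fb (Suc j))"
    unfolding good0_def by blast
  show ?thesis
  proof (cases "a = 0")
    case False
    then show ?thesis using step_good0[OF st M] by simp
  next
    case True
    have "b \<noteq> 0" using st M True unfolding gfb_step_def by (auto split: if_splits)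
    have "M = replicate_mset b (fb (Suc j)) + replicate_mset 0 (fb (Suc (Suc j)))" using M True by simp
    then show ?thesis using step_good0[OF st, of b "Suc j" 0] \<open>b \<noteq> 0\<close> by simp
  qed
qed

lemma reach_good:
  assumes "gfb_step\<^sup>*\<^sup>* (replicate_mset n Leaf) M"
  shows "(good0 M \<or> good1 M) \<and> sum_mset (image_mset leaves M) = n"
  using assms
proof (induction rule: rtranclp_induct)
  case base
  have "replicate_mset n Leaf = replicate_mset n (fb 0) + replicate_mset 0 (fb (Suc 0))" by simp
  then have "good0 (replicate_mset n Leaf)" unfolding good0_def by blast
  then show ?case by (simp add: sum_mset_replicate_mset)
next
  case (step y z)
  then show ?case using step_good step_sum by metis
qed

lemma iso_refl[simp]: "iso t t"
  by (induction t) auto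

lemma clog: "2 ^ m < r \<Longrightarrow> r \<le> 2 ^ Suc m \<Longrightarrow> \<lceil>log 2 (real r)\<rceil> = int m + 1"
proof -
  assume a: "2 ^ m < r" "r \<le> 2 ^ Suc m"
  have r0: "real r > 0" using a by simp
  have "real (2 ^ m) < real r" using a(1) by linarith
  then have "2 powr real m < real r" by (simp add: powr_realpow)
  then have l1: "real m < log 2 (real r)" using less_log_iff[of 2 "real r" "real m"] r0 by simp
  have "real r \<le> real (2 ^ Suc m)" using a(2) by linarith
  moreover have "(2::real) powr real (Suc m) = 2 ^ Suc m" by (rule powr_realpow) simp
  ultimately have "real r \<le> 2 powr real (Suc m)" by simp
  then have l2: "log 2 (real r) \<le> real (Suc m)" using log_le_iff[of 2 "real r" "real (Suc m)"] r0 by simp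
  show ?thesis by (rule ceiling_unique) (use l1 l2 in auto)
qed

lemma clog_pow: "\<lceil>log 2 (real ((2::nat) ^ j))\<rceil> = int j"
  by simp

lemma k_of: "2 ^ m < n \<Longrightarrow> n \<le> 2 ^ Suc m \<Longrightarrow> nat \<lceil>log 2 (real n)\<rceil> = Suc m"
  using clog[of m n] by simp

lemma final:
  fixes A B :: btree
  assumes T: "T = Node A B \<or> T = Node B A" and n: "n = leaves A + leaves B"
    and cfg: "(A = fb j \<and> B = fb j) \<or> (A = fb (Suc j) \<and> B = fb j) \<or>
      (B = fb j \<and> 2 ^ j < leaves A \<and> leaves A < 2 ^ Suc j) \<or>
      (A = fb (Suc j) \<and> 2 ^ j < leaves B \<and> leaves B < 2 ^ Suc j)"
  defines "k \<equiv> nat \<lceil>log 2 (real n)\<rceil>"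
  shows "\<forall>Ta Tb. (T = Node Ta Tb \<or> T = Node Tb Ta) \<and> leaves Ta \<ge> leaves Tb \<longrightarrow>
      (2 * 2 ^ k < 4 * n \<and> 4 * n < 3 * 2 ^ k \<longrightarrow>
         leaves Ta = n - 2 ^ (k - 2) \<and> leaves Tb = 2 ^ (k - 2) \<and>
         iso Tb (fb (k - 2)) \<and> \<lceil>log 2 (real (leaves Ta))\<rceil> = int k - 1) \<and>
      (4 * n = 3 * 2 ^ k \<longrightarrow>
         leaves Ta = 2 ^ (k - 1) \<and> leaves Tb = 2 ^ (k - 2) \<and>
         iso Ta (fb (k - 1)) \<and> iso Tb (fb (k - 2))) \<and>
      (3 * 2 ^ k < 4 * n \<and> n \<le> 2 ^ k \<longrightarrow>
         leaves Ta = 2 ^ (k - 1) \<and> leaves Tb = n - 2 ^ (k - 1) \<and>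
         iso Ta (fb (k - 1)) \<and> \<lceil>log 2 (real (leaves Tb))\<rceil> = int k - 1)"
proof (intro allI impI)
  fix Ta Tb
  assume h: "(T = Node Ta Tb \<or> T = Node Tb Ta) \<and> leaves Ta \<ge> leaves Tb"
  have AB: "leaves B \<le> leaves A" using cfg by auto
  have "Ta = A \<and> Tb = B"
  proof (cases "A = B")
    case True then show ?thesis using h T by auto
  next
    case False
    then have "leaves B < leaves A" using cfg by auto
    then show ?thesis using h T by auto
  qed
  then have Ta: "Ta = A" and Tb: "Tb = B" by auto
  consider (c1) "A = fb j" "B = fb j" | (c2) "A = fb (Suc j)" "B = fb j"
    | (c3) "B = fb j" "2 ^ j < leaves A" "leaves A < 2 ^ Suc j"
    | (c4) "A = fb (Suc j)" "2 ^ j < leaves B" "leaves B < 2 ^ Suc j"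
    using cfg by blast
  then show "(2 * 2 ^ k < 4 * n \<and> 4 * n < 3 * 2 ^ k \<longrightarrow>
         leaves Ta = n - 2 ^ (k - 2) \<and> leaves Tb = 2 ^ (k - 2) \<and>
         iso Tb (fb (k - 2)) \<and> \<lceil>log 2 (real (leaves Ta))\<rceil> = int k - 1) \<and>
      (4 * n = 3 * 2 ^ k \<longrightarrow>
         leaves Ta = 2 ^ (k - 1) \<and> leaves Tb = 2 ^ (k - 2) \<and>
         iso Ta (fb (k - 1)) \<and> iso Tb (fb (k - 2))) \<and>
      (3 * 2 ^ k < 4 * n \<and> n \<le> 2 ^ k \<longrightarrow>
         leaves Ta = 2 ^ (k - 1) \<and> leaves Tb = n - 2 ^ (k - 1) \<and>
         iso Ta (fb (k - 1)) \<and> \<lceil>log 2 (real (leaves Tb))\<rceil> = int k - 1)"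
  proof cases
    case c1
    have nn: "n = 2 ^ Suc j" using n c1 by simp
    have "k = Suc j" unfolding k_def by (rule k_of[of j]) (use nn in simp_all)
    then show ?thesis using nn Ta Tb c1 by (simp add: clog_pow)
  next
    case c2
    have nn: "n = 3 * 2 ^ j" using n c2 by simp
    have "k = Suc (Suc j)" unfolding k_def by (rule k_of[of "Suc j"]) (use nn in simp_all)
    then show ?thesis using nn Ta Tb c2 by simp
  next
    case c3
    have "k = Suc (Suc j)" unfolding k_def by (rule k_of[of "Suc j"]) (use n c3 in simp_all)
    moreover have "\<lceil>log 2 (real (leaves A))\<rceil> = int j + 1" by (rule clog) (use c3 in simp_all)
    ultimately show ?thesis using n Ta Tb c3 by simp
  next
    case c4
    have "k = Suc (Suc j)" unfolding k_def by (rule k_of[of "Suc j"]) (use n c4 in simp_all)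
    moreover have "\<lceil>log 2 (real (leaves B))\<rceil> = int j + 1" by (rule clog) (use c4 in simp_all)
    ultimately show ?thesis using n Ta Tb c4 by simp
  qed
qed

lemma pair_eq: assumes h: "{#u, v#} = {#x, y#}" shows "(u = x \<and> v = y) \<or> (u = y \<and> v = x)"
proof -
  have "u \<in># {#u, v#}" by simp
  then have "u \<in># {#x, y#}" by (simp only: h)
  then have "u = x \<or> u = y" by simp
  then show ?thesis
  proof
    assume "u = x"
    then show ?thesis using h by simp
  next
    assume uy: "u = y"
    have "{#u, v#} - {#y#} = {#x, y#} - {#y#}" using h by simp
    then have "{#v#} = {#x#}" using uy by (simp add: add_mset_commute)
    then show ?thesis using uy by simp
  qed
qed



theorem proposition2:
  fixes n :: nat and T :: btree
  assumes "n \<ge> 2" and "gfb_output n T"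
  defines "k \<equiv> nat \<lceil>log 2 (real n)\<rceil>"
  shows "(\<exists>l r. T = Node l r) \<and>
    (\<forall>Ta Tb. (T = Node Ta Tb \<or> T = Node Tb Ta) \<and> leaves Ta \<ge> leaves Tb \<longrightarrow>
      (2 * 2 ^ k < 4 * n \<and> 4 * n < 3 * 2 ^ k \<longrightarrow>
         leaves Ta = n - 2 ^ (k - 2) \<and> leaves Tb = 2 ^ (k - 2) \<and>
         iso Tb (fb (k - 2)) \<and> \<lceil>log 2 (real (leaves Ta))\<rceil> = int k - 1) \<and>
      (4 * n = 3 * 2 ^ k \<longrightarrow>
         leaves Ta = 2 ^ (k - 1) \<and> leaves Tb = 2 ^ (k - 2) \<and>
         iso Ta (fb (k - 1)) \<and> iso Tb (fb (k - 2))) \<and>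
      (3 * 2 ^ k < 4 * n \<and> n \<le> 2 ^ k \<longrightarrow>
         leaves Ta = 2 ^ (k - 1) \<and> leaves Tb = n - 2 ^ (k - 1) \<and>
         iso Ta (fb (k - 1)) \<and> \<lceil>log 2 (real (leaves Tb))\<rceil> = int k - 1))"
proof -
  have r: "gfb_step\<^sup>*\<^sup>* (replicate_mset n Leaf) {#T#}" using assms(2) unfolding gfb_output_def .
  then obtain y where y: "gfb_step\<^sup>*\<^sup>* (replicate_mset n Leaf) y" "gfb_step y {#T#}"
  proof (cases rule: rtranclp.cases)
    case rtrancl_refl
    then have "size (replicate_mset n Leaf) = size {#T#}" by simp
    then show ?thesis using assms(1) by simp
  next
    case (rtrancl_into_rtrancl b)
    then show ?thesis using that by blast
  qed
  have gy: "good0 y \<or> good1 y" and sy: "sum_mset (image_mset leaves y) = n"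
    using reach_good[OF y(1)] by auto
  obtain u v M0 where uv: "y = add_mset u (add_mset v M0)" "{#T#} = add_mset (Node u v) M0"
    using y(2) by (rule step_split)
  then have M0: "M0 = {#}" and T: "T = Node u v"
    using single_eq_add_mset by auto
  then have yuv: "y = {#u, v#}" using uv by simp
  have nuv: "n = leaves u + leaves v" using sy yuv by simp
  have "\<exists>A B j. (T = Node A B \<or> T = Node B A) \<and> n = leaves A + leaves B \<and>
     ((A = fb j \<and> B = fb j) \<or> (A = fb (Suc j) \<and> B = fb j) \<or>
      (B = fb j \<and> 2 ^ j < leaves A \<and> leaves A < 2 ^ Suc j) \<or>
      (A = fb (Suc j) \<and> 2 ^ j < leaves B \<and> leaves B < 2 ^ Suc j))"
  proof (cases "good0 y")
    case True
    then obtain j a b where yy: "y = replicate_mset a (fb j) + replicate_mset b (fb (Suc j))"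
      unfolding good0_def by blast
    have "size y = 2" using yuv by simp
    then have ab: "a + b = 2" using yy by simp
    then consider "a = 2" "b = 0" | "a = 1" "b = 1" | "a = 0" "b = 2" by linarith
    then show ?thesis
    proof cases
      case 1
      have pe: "{#u, v#} = {#fb j, fb j#}" unfolding yuv[symmetric] yy 1 by (simp add: numeral_2_eq_2)
      then have "u = fb j" "v = fb j" using pair_eq[OF pe] by auto
      then show ?thesis using T nuv by blast
    next
      case 2
      have pe: "{#u, v#} = {#fb (Suc j), fb j#}" unfolding yuv[symmetric] yy 2 by (simp add: add_mset_commute)
      then have "(u = fb (Suc j) \<and> v = fb j) \<or> (u = fb j \<and> v = fb (Suc j))" using pair_eq[OF pe] by auto
      then show ?thesis using T nuv by (metis add.commute)
    next
      case 3
      have pe: "{#u, v#} = {#fb (Suc j), fb (Suc j)#}" unfolding yuv[symmetric] yy 3 by (simp add: numeral_2_eq_2)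
      then have "u = fb (Suc j)" "v = fb (Suc j)" using pair_eq[OF pe] by auto
      then show ?thesis using T nuv by blast
    qed
  next
    case False
    with gy obtain j a b R where yy: "y = add_mset R (replicate_mset a (fb j) + replicate_mset b (fb (Suc j)))"
      and R: "2 ^ j < leaves R" "leaves R < 2 ^ Suc j"
      unfolding good1_def by blast
    have "size y = 2" using yuv by simp
    then have ab: "a + b = 1" using yy by simp
    then consider "a = 1" "b = 0" | "a = 0" "b = 1" by linarith
    then show ?thesis
    proof cases
      case 1
      have pe: "{#u, v#} = {#R, fb j#}" unfolding yuv[symmetric] yy 1 by simp
      then have "(u = R \<and> v = fb j) \<or> (u = fb j \<and> v = R)" using pair_eq[OF pe] by auto
      then show ?thesis using T nuv R by (metis add.commute)
    next
      case 2
      have pe: "{#u, v#} = {#fb (Suc j), R#}" unfolding yuv[symmetric] yy 2 by (simp add: add_mset_commute)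
      then have "(u = fb (Suc j) \<and> v = R) \<or> (u = R \<and> v = fb (Suc j))" using pair_eq[OF pe] by auto
      then show ?thesis using T nuv R by (metis add.commute)
    qed
  qed
  then obtain A B j where AB: "T = Node A B \<or> T = Node B A" "n = leaves A + leaves B"
     "(A = fb j \<and> B = fb j) \<or> (A = fb (Suc j) \<and> B = fb j) \<or>
      (B = fb j \<and> 2 ^ j < leaves A \<and> leaves A < 2 ^ Suc j) \<or>
      (A = fb (Suc j) \<and> 2 ^ j < leaves B \<and> leaves B < 2 ^ Suc j)" by blast
  have "\<exists>l r. T = Node l r" using T by blast
  moreover note final[OF AB]
  ultimately show ?thesis unfolding k_def by (rule conjI)
qed

end
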